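(* Let $\alpha_i,\beta_i,\gamma_i,\delta_i\in(0,\pi)$ satisfy $\alpha_i\pm\beta_i\pm\gamma_i\pm\delta_i\not\equiv0\pmod{2\pi}$ for all sign choices and $M_i>0$, for each $i=1,\dots,4$. Then for each $i$: \[\cos\alpha_i=\varepsilon_i\frac{1-y_iz_iu_i+x_iz_iu_i-x_iy_iu_i}{2\sqrt{x_iz_iu_i(1+y_i)(1+u_iy_i)}},\qquad \cos\gamma_i=\varepsilon_i\frac{1+y_iz_iu_i-x_iz_iu_i-x_iy_iu_i}{2\sqrt{y_iz_iu_i(1+x_i)(1+u_ix_i)}},\] \[\cos\delta_i=\varepsilon_i\frac{1-y_iz_iu_i-x_iz_iu_i+x_iy_iu_i}{2\sqrt{x_iy_iu_i(1+z_i)(1+u_iz_i)}},\qquad \cos\sigma_i=\frac{1-u_i(x_iy_i+x_iz_i+y_iz_i+2x_iy_iz_i)}{2\sqrt{x_iy_iz_iu_i^2(1+x_i)(1+y_i)(1+z_i)}},\] \[\cos\beta_i=\varepsilon_i\frac{u_i(1+x_i)(1+y_i)(1+z_i)+(1+u_ix_i)(1+u_iy_i)(1+u_iz_i)-u_ix_iy_iz_i(u_i-1)^2}{2\sqrt{u_i(1+x_i)(1+y_i)(1+z_i)(1+u_ix_i)(1+u_iy_i)(1+u_iz_i)}}.\]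
   Context: $\sigma_i=(\alpha_i+\beta_i+\gamma_i+\delta_i)/2$, $\varepsilon_i=\operatorname{sign}(\sin\sigma_i)$, $\overline{\alpha}_i=\sigma_i-\alpha_i$, $\overline{\beta}_i=\sigma_i-\beta_i$, $\overline{\gamma}_i=\sigma_i-\gamma_i$, $\overline{\delta}_i=\sigma_i-\delta_i$; $a_i=\sin\alpha_i/\sin\overline{\alpha}_i$, $b_i=\sin\beta_i/\sin\overline{\beta}_i$, $c_i=\sin\gamma_i/\sin\overline{\gamma}_i$, $d_i=\sin\delta_i/\sin\overline{\delta}_i$, $M_i=a_ib_ic_id_i$, $r_i=a_id_i$, $s_i=c_id_i$, $f_i=a_ic_i$, $u_i=1-M_i$, $x_i=1/(r_i-1)$, $y_i=1/(s_i-1)$, $z_i=1/(f_i-1)$. *)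

theory Defs
  imports Complex_Main
begin

definition sig :: "real \<Rightarrow> real \<Rightarrow> real \<Rightarrow> real \<Rightarrow> real" where
  "sig al be ga de = (al + be + ga + de) / 2"

definition eps :: "real \<Rightarrow> real \<Rightarrow> real \<Rightarrow> real \<Rightarrow> real" where
  "eps al be ga de = sgn (sin (sig al be ga de))"

definition qa :: "real \<Rightarrow> real \<Rightarrow> real \<Rightarrow> real \<Rightarrow> real" where
  "qa al be ga de = sin al / sin (sig al be ga de - al)"
definition qb :: "real \<Rightarrow> real \<Rightarrow> real \<Rightarrow> real \<Rightarrow> real" where
  "qb al be ga de = sin be / sin (sig al be ga de - be)"
definition qc :: "real \<Rightarrow> real \<Rightarrow> real \<Rightarrow> real \<Rightarrow> real" where
  "qc al be ga de = sin ga / sin (sig al be ga de - ga)"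
definition qd :: "real \<Rightarrow> real \<Rightarrow> real \<Rightarrow> real \<Rightarrow> real" where
  "qd al be ga de = sin de / sin (sig al be ga de - de)"

definition qM :: "real \<Rightarrow> real \<Rightarrow> real \<Rightarrow> real \<Rightarrow> real" where
  "qM al be ga de = qa al be ga de * qb al be ga de * qc al be ga de * qd al be ga de"
definition qr :: "real \<Rightarrow> real \<Rightarrow> real \<Rightarrow> real \<Rightarrow> real" where
  "qr al be ga de = qa al be ga de * qd al be ga de"
definition qs :: "real \<Rightarrow> real \<Rightarrow> real \<Rightarrow> real \<Rightarrow> real" where
  "qs al be ga de = qc al be ga de * qd al be ga de"
definition qf :: "real \<Rightarrow> real \<Rightarrow> real \<Rightarrow> real \<Rightarrow> real" where
  "qf al be ga de = qa al be ga de * qc al be ga de"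
definition qu :: "real \<Rightarrow> real \<Rightarrow> real \<Rightarrow> real \<Rightarrow> real" where
  "qu al be ga de = 1 - qM al be ga de"
definition qx :: "real \<Rightarrow> real \<Rightarrow> real \<Rightarrow> real \<Rightarrow> real" where
  "qx al be ga de = 1 / (qr al be ga de - 1)"
definition qy :: "real \<Rightarrow> real \<Rightarrow> real \<Rightarrow> real \<Rightarrow> real" where
  "qy al be ga de = 1 / (qs al be ga de - 1)"
definition qz :: "real \<Rightarrow> real \<Rightarrow> real \<Rightarrow> real \<Rightarrow> real" where
  "qz al be ga de = 1 / (qf al be ga de - 1)"

definition nondeg :: "real \<Rightarrow> real \<Rightarrow> real \<Rightarrow> real \<Rightarrow> bool" where
  "nondeg al be ga de \<longleftrightarrow>
     (\<forall>s1 s2 s3 :: real. s1 \<in> {1, -1} \<longrightarrow> s2 \<in> {1, -1} \<longrightarrow> s3 \<in> {1, -1} \<longrightarrow>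
        (\<forall>k :: int. al + s1 * be + s2 * ga + s3 * de \<noteq> 2 * pi * of_int k))"

end

theory Submission
  imports Defs
begin

lemma trig_ids:
  fixes a b c d :: real
  defines "S \<equiv> sin(a+b+c+d)" and "pa \<equiv> sin(-a+b+c+d)" and "pb \<equiv> sin(a-b+c+d)"
    and "pc \<equiv> sin(a+b-c+d)" and "pd \<equiv> sin(a+b+c-d)"
    and "sP \<equiv> sin(-a+b+c-d)" and "sQ \<equiv> sin(a+b-c-d)" and "sR \<equiv> sin(-a+b-c+d)"
    and "sA \<equiv> sin(2*a)" and "sB \<equiv> sin(2*b)" and "sC \<equiv> sin(2*c)" and "sD \<equiv> sin(2*d)"
  shows "sA*sD-pa*pd = -S*sP" "sC*sD-pc*pd = -S*sQ" "sA*sC-pa*pc = -S*sR"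
   "pa*pb*pc*pd-sA*sB*sC*sD = -S*sP*sQ*sR"
   "sA*sD-pb*pc = sQ*sR" "sC*sD-pa*pb = sP*sR" "sA*sC-pb*pd = sP*sQ"
   "S*pb+pc*sP-pa*sQ+pd*sR = 2*cos(2*a)*sC*sD"
   "S*pb-pc*sP+pa*sQ+pd*sR = 2*cos(2*c)*sA*sD"
   "S*pb+pc*sP+pa*sQ-pd*sR = 2*cos(2*d)*sA*sC"
   "S*S*pb+S*(pd*sR+pa*sQ+pc*sP)-2*pa*pc*pd = 2*cos(a+b+c+d)*sA*sC*sD"
   "pb*pb+S*S-sB*sB = 2*S*pb*cos(2*b)"
proof -
  have h: "sin a^2 + cos a^2 = 1" "sin b^2 + cos b^2 = 1" "sin c^2 + cos c^2 = 1" "sin d^2 + cos d^2 = 1" by simp_all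
  note U = assms mult_2 sin_add cos_add sin_diff cos_diff sin_minus cos_minus diff_conv_add_uminus
  show "sA*sD-pa*pd = -S*sP" using h unfolding U by algebra
  show "sC*sD-pc*pd = -S*sQ" using h unfolding U by algebra
  show "sA*sC-pa*pc = -S*sR" using h unfolding U by algebra
  show "pa*pb*pc*pd-sA*sB*sC*sD = -S*sP*sQ*sR" using h unfolding U by algebra
  show "sA*sD-pb*pc = sQ*sR" using h unfolding U by algebra
  show "sC*sD-pa*pb = sP*sR" using h unfolding U by algebra
  show "sA*sC-pb*pd = sP*sQ" using h unfolding U by algebra
  show "S*pb+pc*sP-pa*sQ+pd*sR = 2*cos(2*a)*sC*sD" using h unfolding U by algebra
  show "S*pb-pc*sP+pa*sQ+pd*sR = 2*cos(2*c)*sA*sD" using h unfolding U by algebra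
  show "S*pb+pc*sP+pa*sQ-pd*sR = 2*cos(2*d)*sA*sC" using h unfolding U by algebra
  show "S*S*pb+S*(pd*sR+pa*sQ+pc*sP)-2*pa*pc*pd = 2*cos(a+b+c+d)*sA*sC*sD" using h unfolding U by algebra
  show "pb*pb+S*S-sB*sB = 2*S*pb*cos(2*b)" using h unfolding U by algebra
qed

lemma alg_main:
  fixes S pa pb pc pd sP sQ sR sA sB sC sD cA cB cC cD cs x y z u e :: real
  assumes pos: "pa > 0" "pb > 0" "pc > 0" "pd > 0" "sA > 0" "sB > 0" "sC > 0" "sD > 0"
    and nz: "S \<noteq> 0" "sP \<noteq> 0" "sQ \<noteq> 0" "sR \<noteq> 0"
    and T1: "sA*sD-pa*pd = -S*sP" and T2: "sC*sD-pc*pd = -S*sQ" and T3: "sA*sC-pa*pc = -S*sR"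
    and T4: "pa*pb*pc*pd-sA*sB*sC*sD = -S*sP*sQ*sR"
    and T5: "sA*sD-pb*pc = sQ*sR" and T6: "sC*sD-pa*pb = sP*sR" and T7: "sA*sC-pb*pd = sP*sQ"
    and F1: "S*pb+pc*sP-pa*sQ+pd*sR = 2*cA*sC*sD"
    and F2: "S*pb-pc*sP+pa*sQ+pd*sR = 2*cC*sA*sD"
    and F3: "S*pb+pc*sP+pa*sQ-pd*sR = 2*cD*sA*sC"
    and F4: "S*S*pb+S*(pd*sR+pa*sQ+pc*sP)-2*pa*pc*pd = 2*cs*sA*sC*sD"
    and F5: "pb*pb+S*S-sB*sB = 2*S*pb*cB"
    and e: "e = sgn S"
    and x: "x = 1 / ((sA/pa)*(sD/pd) - 1)"
    and y: "y = 1 / ((sC/pc)*(sD/pd) - 1)"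
    and z: "z = 1 / ((sA/pa)*(sC/pc) - 1)"
    and u: "u = 1 - (sA/pa)*(sB/pb)*(sC/pc)*(sD/pd)"
  shows "cA = e * (1 - y*z*u + x*z*u - x*y*u) / (2 * sqrt (x*z*u*(1+y)*(1+u*y)))
          \<and> cC = e * (1 + y*z*u - x*z*u - x*y*u) / (2 * sqrt (y*z*u*(1+x)*(1+u*x)))
          \<and> cD = e * (1 - y*z*u - x*z*u + x*y*u) / (2 * sqrt (x*y*u*(1+z)*(1+u*z)))
          \<and> cs = (1 - u*(x*y + x*z + y*z + 2*x*y*z)) / (2 * sqrt (x*y*z*u^2*(1+x)*(1+y)*(1+z)))
          \<and> cB = e * (u*(1+x)*(1+y)*(1+z) + (1+u*x)*(1+u*y)*(1+u*z) - u*x*y*z*(u-1)^2)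
                 / (2 * sqrt (u*(1+x)*(1+y)*(1+z)*(1+u*x)*(1+u*y)*(1+u*z)))"
proof -
  have ne: "pa \<noteq> 0" "pb \<noteq> 0" "pc \<noteq> 0" "pd \<noteq> 0" "sA \<noteq> 0" "sB \<noteq> 0" "sC \<noteq> 0" "sD \<noteq> 0"
    using pos by auto
  have hx: "x = -pa*pd/(S*sP)"
  proof -
    have "(sA/pa)*(sD/pd) - 1 = -S*sP/(pa*pd)" apply (simp add: ne field_simps) using T1 by algebra
    thus ?thesis using x nz ne by simp
  qed
  have hy: "y = -pc*pd/(S*sQ)"
  proof -
    have "(sC/pc)*(sD/pd) - 1 = -S*sQ/(pc*pd)" apply (simp add: ne field_simps) using T2 by algebra
    thus ?thesis using y nz ne by simp
  qed
  have hz: "z = -pa*pc/(S*sR)"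
  proof -
    have "(sA/pa)*(sC/pc) - 1 = -S*sR/(pa*pc)" apply (simp add: ne field_simps) using T3 by algebra
    thus ?thesis using z nz ne by simp
  qed
  have hu: "u = -S*sP*sQ*sR/(pa*pb*pc*pd)"
    unfolding u apply (simp add: ne field_simps) using T4 by algebra
  have hum1: "u - 1 = -(sA*sB*sC*sD)/(pa*pb*pc*pd)"
    using u ne by (simp add: field_simps)
  have h1x: "1+x = -sA*sD/(S*sP)" unfolding hx apply (simp add: nz field_simps) using T1 by algebra
  have h1y: "1+y = -sC*sD/(S*sQ)" unfolding hy apply (simp add: nz field_simps) using T2 by algebra
  have h1z: "1+z = -sA*sC/(S*sR)" unfolding hz apply (simp add: nz field_simps) using T3 by algebra
  have h1ux: "1+u*x = sA*sD/(pb*pc)"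
  proof -
    have "u*x = sQ*sR/(pb*pc)" unfolding hu hx using nz ne by (simp add: field_simps)
    thus ?thesis apply (simp add: ne field_simps) using T5 by algebra
  qed
  have h1uy: "1+u*y = sC*sD/(pa*pb)"
  proof -
    have "u*y = sP*sR/(pa*pb)" unfolding hu hy using nz ne by (simp add: field_simps)
    thus ?thesis apply (simp add: ne field_simps) using T6 by algebra
  qed
  have h1uz: "1+u*z = sA*sC/(pb*pd)"
  proof -
    have "u*z = sP*sQ/(pb*pd)" unfolding hu hz using nz ne by (simp add: field_simps)
    thus ?thesis apply (simp add: ne field_simps) using T7 by algebra
  qed
  have xzu: "x*z*u = -pa*sQ/(S*pb)" unfolding hx hz hu using nz ne by (simp add: field_simps)
  have yzu: "y*z*u = -pc*sP/(S*pb)" unfolding hy hz hu using nz ne by (simp add: field_simps)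
  have xyu: "x*y*u = -pd*sR/(S*pb)" unfolding hx hy hu using nz ne by (simp add: field_simps)
  have xyzu: "x*y*z*u = pa*pc*pd/(S*S*pb)" unfolding hx hy hz hu using nz ne by (simp add: field_simps)
  have eS: "e * \<bar>S\<bar> = S" using e by (simp add: sgn_mult_abs)
  have sq: "\<And>w. sqrt (w^2) = \<bar>w\<bar>" by simp
  have rA: "x*z*u*(1+y)*(1+u*y) = (sC*sD/(S*pb))^2"
    by (simp only: xzu h1y h1uy) (use nz ne in \<open>simp add: field_simps power2_eq_square\<close>)
  have sA': "sqrt (x*z*u*(1+y)*(1+u*y)) = sC*sD/(\<bar>S\<bar>*pb)"
    using pos by (simp add: rA abs_mult abs_divide)
  have nA: "1 - y*z*u + x*z*u - x*y*u = 2*cA*sC*sD/(S*pb)"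
  proof -
    have "1 - y*z*u + x*z*u - x*y*u = (S*pb+pc*sP-pa*sQ+pd*sR)/(S*pb)"
      by (simp only: xzu yzu xyu) (use nz ne in \<open>simp add: field_simps\<close>)
    thus ?thesis using F1 by simp
  qed
  have gA: "cA = e * (1 - y*z*u + x*z*u - x*y*u) / (2 * sqrt (x*z*u*(1+y)*(1+u*y)))"
    unfolding sA' nA using nz ne eS by (simp add: field_simps)
  have rC: "y*z*u*(1+x)*(1+u*x) = (sA*sD/(S*pb))^2"
    by (simp only: yzu h1x h1ux) (use nz ne in \<open>simp add: field_simps power2_eq_square\<close>)
  have sC': "sqrt (y*z*u*(1+x)*(1+u*x)) = sA*sD/(\<bar>S\<bar>*pb)"
    using pos by (simp add: rC abs_mult abs_divide)
  have nC: "1 + y*z*u - x*z*u - x*y*u = 2*cC*sA*sD/(S*pb)"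
  proof -
    have "1 + y*z*u - x*z*u - x*y*u = (S*pb-pc*sP+pa*sQ+pd*sR)/(S*pb)"
      by (simp only: xzu yzu xyu) (use nz ne in \<open>simp add: field_simps\<close>)
    thus ?thesis using F2 by simp
  qed
  have gC: "cC = e * (1 + y*z*u - x*z*u - x*y*u) / (2 * sqrt (y*z*u*(1+x)*(1+u*x)))"
    unfolding sC' nC using nz ne eS by (simp add: field_simps)
  have rD: "x*y*u*(1+z)*(1+u*z) = (sA*sC/(S*pb))^2"
    by (simp only: xyu h1z h1uz) (use nz ne in \<open>simp add: field_simps power2_eq_square\<close>)
  have sD': "sqrt (x*y*u*(1+z)*(1+u*z)) = sA*sC/(\<bar>S\<bar>*pb)"
    using pos by (simp add: rD abs_mult abs_divide)
  have nD: "1 - y*z*u - x*z*u + x*y*u = 2*cD*sA*sC/(S*pb)"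
  proof -
    have "1 - y*z*u - x*z*u + x*y*u = (S*pb+pc*sP+pa*sQ-pd*sR)/(S*pb)"
      by (simp only: xzu yzu xyu) (use nz ne in \<open>simp add: field_simps\<close>)
    thus ?thesis using F3 by simp
  qed
  have gD: "cD = e * (1 - y*z*u - x*z*u + x*y*u) / (2 * sqrt (x*y*u*(1+z)*(1+u*z)))"
    unfolding sD' nD using nz ne eS by (simp add: field_simps)
  have ua: "u*(1+x)*(1+y)*(1+z) = sA*sA*sC*sC*sD*sD/(S*S*(pa*pb*pc*pd))"
    unfolding h1x h1y h1z hu using nz ne by (simp add: field_simps)
  have rs0: "x*y*z*u^2*(1+x)*(1+y)*(1+z) = (x*y*z*u)*(u*(1+x)*(1+y)*(1+z))"
    by (simp add: power2_eq_square algebra_simps)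
  have rs: "x*y*z*u^2*(1+x)*(1+y)*(1+z) = (sA*sC*sD/(S*S*pb))^2"
    unfolding rs0 xyzu ua using nz ne by (simp add: field_simps power2_eq_square)
  have ss': "sqrt (x*y*z*u^2*(1+x)*(1+y)*(1+z)) = sA*sC*sD/(S*S*pb)"
    using pos by (simp add: rs abs_mult abs_divide)
  have ns: "1 - u*(x*y + x*z + y*z + 2*x*y*z) = 2*cs*sA*sC*sD/(S*S*pb)"
  proof -
    have "u*(x*y + x*z + y*z + 2*x*y*z) = x*y*u + x*z*u + y*z*u + 2*(x*y*z*u)"
      by (simp add: algebra_simps)
    also have "\<dots> = -pd*sR/(S*pb) - pa*sQ/(S*pb) - pc*sP/(S*pb) + 2*(pa*pc*pd/(S*S*pb))"
      unfolding xyu xzu yzu xyzu by simp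
    finally have E: "u*(x*y + x*z + y*z + 2*x*y*z) = -pd*sR/(S*pb) - pa*sQ/(S*pb) - pc*sP/(S*pb) + 2*(pa*pc*pd/(S*S*pb))" .
    have "1 - u*(x*y + x*z + y*z + 2*x*y*z) = (S*S*pb+S*(pd*sR+pa*sQ+pc*sP)-2*pa*pc*pd)/(S*S*pb)"
      unfolding E using nz ne by (simp add: field_simps)
    thus ?thesis using F4 by simp
  qed
  have gs: "cs = (1 - u*(x*y + x*z + y*z + 2*x*y*z)) / (2 * sqrt (x*y*z*u^2*(1+x)*(1+y)*(1+z)))"
    unfolding ss' ns using nz ne by (simp add: field_simps)
  have ub: "(1+u*x)*(1+u*y)*(1+u*z) = sA*sA*sC*sC*sD*sD/(pa*pb*pb*pb*pc*pd)"
    unfolding h1ux h1uy h1uz using nz ne by (simp add: field_simps)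
  have rb0: "u*(1+x)*(1+y)*(1+z)*(1+u*x)*(1+u*y)*(1+u*z) = (u*(1+x)*(1+y)*(1+z))*((1+u*x)*(1+u*y)*(1+u*z))"
    by (simp add: algebra_simps)
  have rb: "u*(1+x)*(1+y)*(1+z)*(1+u*x)*(1+u*y)*(1+u*z) = (sA*sA*sC*sC*sD*sD/(S*pa*pb*pb*pc*pd))^2"
    unfolding rb0 by (simp only: ua ub) (use nz ne in \<open>simp add: field_simps power2_eq_square\<close>)
  have sb': "sqrt (u*(1+x)*(1+y)*(1+z)*(1+u*x)*(1+u*y)*(1+u*z)) = sA*sA*sC*sC*sD*sD/(\<bar>S\<bar>*pa*pb*pb*pc*pd)"
    using pos by (simp add: rb abs_mult abs_divide)
  have nb: "u*(1+x)*(1+y)*(1+z) + (1+u*x)*(1+u*y)*(1+u*z) - u*x*y*z*(u-1)^2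
      = sA*sA*sC*sC*sD*sD*(2*S*pb*cB)/(S*S*pb*pb*(pa*pb*pc*pd))"
  proof -
    have "u*x*y*z*(u-1)^2 = (x*y*z*u)*(u-1)^2" by (simp add: algebra_simps)
    hence "u*x*y*z*(u-1)^2 = sA*sA*sB*sB*sC*sC*sD*sD/(S*S*pb*pb*(pa*pb*pc*pd))"
      unfolding xyzu hum1 using nz ne by (simp add: field_simps power2_eq_square)
    hence E: "u*x*y*z*(u-1)^2 = sA*sA*sB*sB*sC*sC*sD*sD/(S*S*pb*pb*(pa*pb*pc*pd))" .
    have "u*(1+x)*(1+y)*(1+z) + (1+u*x)*(1+u*y)*(1+u*z) - u*x*y*z*(u-1)^2
      = sA*sA*sC*sC*sD*sD*(pb*pb+S*S-sB*sB)/(S*S*pb*pb*(pa*pb*pc*pd))"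
      unfolding ua ub E using nz ne by (simp add: field_simps)
    thus ?thesis using F5 by simp
  qed
  have gB: "cB = e * (u*(1+x)*(1+y)*(1+z) + (1+u*x)*(1+u*y)*(1+u*z) - u*x*y*z*(u-1)^2)
                 / (2 * sqrt (u*(1+x)*(1+y)*(1+z)*(1+u*x)*(1+u*y)*(1+u*z)))"
    unfolding sb' nb using nz ne eS by (simp add: field_simps)
  show ?thesis using gA gB gC gD gs by blast
qed

lemma sin_nonpos_range:
  fixes t :: real
  assumes "-pi < t" "t < 2*pi" "\<not> (0 < t \<and> t < pi)"
  shows "sin t \<le> 0"
proof (cases "t \<le> 0")
  case True
  have "sin (-t) \<ge> 0" using True assms by (intro sin_ge_zero) auto
  thus ?thesis by simp
next
  case False
  hence "t \<ge> pi" using assms by auto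
  have "sin (t - pi) \<ge> 0" using \<open>t \<ge> pi\<close> assms by (intro sin_ge_zero) auto
  thus ?thesis by (simp add: sin_diff)
qed

lemma bars_pos:
  fixes a b c d :: real
  assumes a: "0 < a" "a < pi/2" and b: "0 < b" "b < pi/2" and c: "0 < c" "c < pi/2"
    and d: "0 < d" "d < pi/2"
    and D: "sin(-a+b+c+d)*sin(a-b+c+d)*sin(a+b-c+d)*sin(a+b+c-d) > 0"
  shows "sin(-a+b+c+d) > 0" "sin(a-b+c+d) > 0" "sin(a+b-c+d) > 0" "sin(a+b+c-d) > 0"
proof -
  have alt: "sin t > 0 \<or> (sin t \<le> 0 \<and> (t \<le> 0 \<or> t \<ge> pi))" if "-pi < t" "t < 2*pi" for t :: real
  proof (cases "0 < t \<and> t < pi")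
    case True thus ?thesis by (simp add: sin_gt_zero)
  next
    case False thus ?thesis using sin_nonpos_range[OF that False] by auto
  qed
  have A: "sin(-a+b+c+d) > 0 \<or> (sin(-a+b+c+d) \<le> 0 \<and> (-a+b+c+d \<le> 0 \<or> -a+b+c+d \<ge> pi))"
    by (rule alt) (use a b c d in auto)
  have B: "sin(a-b+c+d) > 0 \<or> (sin(a-b+c+d) \<le> 0 \<and> (a-b+c+d \<le> 0 \<or> a-b+c+d \<ge> pi))"
    by (rule alt) (use a b c d in auto)
  have C: "sin(a+b-c+d) > 0 \<or> (sin(a+b-c+d) \<le> 0 \<and> (a+b-c+d \<le> 0 \<or> a+b-c+d \<ge> pi))"
    by (rule alt) (use a b c d in auto)
  have Dd: "sin(a+b+c-d) > 0 \<or> (sin(a+b+c-d) \<le> 0 \<and> (a+b+c-d \<le> 0 \<or> a+b+c-d \<ge> pi))"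
    by (rule alt) (use a b c d in auto)
  define p1 where "p1 = sin(-a+b+c+d)"
  define p2 where "p2 = sin(a-b+c+d)"
  define p3 where "p3 = sin(a+b-c+d)"
  define p4 where "p4 = sin(a+b+c-d)"
  have DD: "p1*p2*p3*p4 > 0" using D by (simp add: p1_def p2_def p3_def p4_def)
  have s1: "p1 > 0 \<or> (p2 > 0 \<and> p3 > 0 \<and> p4 > 0 \<and> p1 \<le> 0)"
    using A B C Dd a b c d unfolding p1_def p2_def p3_def p4_def by linarith
  have s2: "p2 > 0 \<or> (p1 > 0 \<and> p3 > 0 \<and> p4 > 0 \<and> p2 \<le> 0)"
    using A B C Dd a b c d unfolding p1_def p2_def p3_def p4_def by linarith
  have s3: "p3 > 0 \<or> (p1 > 0 \<and> p2 > 0 \<and> p4 > 0 \<and> p3 \<le> 0)"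
    using A B C Dd a b c d unfolding p1_def p2_def p3_def p4_def by linarith
  have s4: "p4 > 0 \<or> (p1 > 0 \<and> p2 > 0 \<and> p3 > 0 \<and> p4 \<le> 0)"
    using A B C Dd a b c d unfolding p1_def p2_def p3_def p4_def by linarith
  have "p1 > 0"
  proof (rule ccontr)
    assume "\<not> p1 > 0"
    with s1 have "p2*p3*p4 > 0" "p1 \<le> 0" by auto
    hence "p1*(p2*p3*p4) \<le> 0" by (simp add: mult_nonpos_nonneg)
    thus False using DD by (simp add: mult.assoc)
  qed
  moreover have "p2 > 0"
  proof (rule ccontr)
    assume "\<not> p2 > 0"
    with s2 have "p1*p3*p4 > 0" "p2 \<le> 0" by auto
    hence "p2*(p1*p3*p4) \<le> 0" by (simp add: mult_nonpos_nonneg)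
    thus False using DD by (simp add: ac_simps)
  qed
  moreover have "p3 > 0"
  proof (rule ccontr)
    assume "\<not> p3 > 0"
    with s3 have "p1*p2*p4 > 0" "p3 \<le> 0" by auto
    hence "p3*(p1*p2*p4) \<le> 0" by (simp add: mult_nonpos_nonneg)
    thus False using DD by (simp add: ac_simps)
  qed
  moreover have "p4 > 0"
  proof (rule ccontr)
    assume "\<not> p4 > 0"
    with s4 have "p1*p2*p3 > 0" "p4 \<le> 0" by auto
    hence "p4*(p1*p2*p3) \<le> 0" by (simp add: mult_nonpos_nonneg)
    thus False using DD by (simp add: ac_simps)
  qed
  ultimately show "sin(-a+b+c+d) > 0" "sin(a-b+c+d) > 0" "sin(a+b-c+d) > 0" "sin(a+b+c-d) > 0"
    by (simp_all add: p1_def p2_def p3_def p4_def)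
qed

lemma sin_half_nz:
  fixes t :: real
  assumes "\<forall>k::int. 2*t \<noteq> 2*pi*of_int k"
  shows "sin t \<noteq> 0"
proof
  assume "sin t = 0"
  then obtain n :: int where "t = of_int n * pi" by (auto simp: sin_zero_iff_int2)
  hence "2*t = 2*pi*of_int n" by simp
  thus False using assms by blast
qed


theorem lemma6:
  fixes \<alpha> \<beta> \<gamma> \<delta> :: "nat \<Rightarrow> real"
  assumes ang: "\<And>i. i \<in> {1..4} \<Longrightarrow>
      \<alpha> i \<in> {0<..<pi} \<and> \<beta> i \<in> {0<..<pi} \<and> \<gamma> i \<in> {0<..<pi} \<and> \<delta> i \<in> {0<..<pi}"
    and nd: "\<And>i. i \<in> {1..4} \<Longrightarrow> nondeg (\<alpha> i) (\<beta> i) (\<gamma> i) (\<delta> i)"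
    and Mpos: "\<And>i. i \<in> {1..4} \<Longrightarrow> qM (\<alpha> i) (\<beta> i) (\<gamma> i) (\<delta> i) > 0"
    and i: "i \<in> {1..4}"
  shows "let e = eps (\<alpha> i) (\<beta> i) (\<gamma> i) (\<delta> i);
             s = sig (\<alpha> i) (\<beta> i) (\<gamma> i) (\<delta> i);
             x = qx (\<alpha> i) (\<beta> i) (\<gamma> i) (\<delta> i);
             y = qy (\<alpha> i) (\<beta> i) (\<gamma> i) (\<delta> i);
             z = qz (\<alpha> i) (\<beta> i) (\<gamma> i) (\<delta> i);
             u = qu (\<alpha> i) (\<beta> i) (\<gamma> i) (\<delta> i)
         in cos (\<alpha> i) = e * (1 - y*z*u + x*z*u - x*y*u) / (2 * sqrt (x*z*u*(1+y)*(1+u*y)))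
          \<and> cos (\<gamma> i) = e * (1 + y*z*u - x*z*u - x*y*u) / (2 * sqrt (y*z*u*(1+x)*(1+u*x)))
          \<and> cos (\<delta> i) = e * (1 - y*z*u - x*z*u + x*y*u) / (2 * sqrt (x*y*u*(1+z)*(1+u*z)))
          \<and> cos s = (1 - u*(x*y + x*z + y*z + 2*x*y*z)) / (2 * sqrt (x*y*z*u^2*(1+x)*(1+y)*(1+z)))
          \<and> cos (\<beta> i) = e * (u*(1+x)*(1+y)*(1+z) + (1+u*x)*(1+u*y)*(1+u*z) - u*x*y*z*(u-1)^2)
                 / (2 * sqrt (u*(1+x)*(1+y)*(1+z)*(1+u*x)*(1+u*y)*(1+u*z)))"
  
proof -
  define A where "A = \<alpha> i"
  define B where "B = \<beta> i"
  define C where "C = \<gamma> i"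
  define D where "D = \<delta> i"
  define a where "a = A/2"
  define b where "b = B/2"
  define c where "c = C/2"
  define d where "d = D/2"
  have angs: "A \<in> {0<..<pi}" "B \<in> {0<..<pi}" "C \<in> {0<..<pi}" "D \<in> {0<..<pi}"
    using ang[OF i] by (auto simp: A_def B_def C_def D_def)
  have ndi: "nondeg A B C D" using nd[OF i] by (simp add: A_def B_def C_def D_def)
  have Mi: "qM A B C D > 0" using Mpos[OF i] by (simp add: A_def B_def C_def D_def)
  have Aa: "A = 2*a" and Bb: "B = 2*b" and Cc: "C = 2*c" and Dd: "D = 2*d"
    by (simp_all add: a_def b_def c_def d_def)
  have sg: "sig A B C D = a+b+c+d" "sig A B C D - A = -a+b+c+d" "sig A B C D - B = a-b+c+d"
     "sig A B C D - C = a+b-c+d" "sig A B C D - D = a+b+c-d"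
    by (simp_all add: sig_def a_def b_def c_def d_def field_simps)
  have qa: "qa A B C D = sin(2*a)/sin(-a+b+c+d)" unfolding qa_def sg(2) by (simp only: Aa)
  have qb: "qb A B C D = sin(2*b)/sin(a-b+c+d)" unfolding qb_def sg(3) by (simp only: Bb)
  have qc: "qc A B C D = sin(2*c)/sin(a+b-c+d)" unfolding qc_def sg(4) by (simp only: Cc)
  have qd: "qd A B C D = sin(2*d)/sin(a+b+c-d)" unfolding qd_def sg(5) by (simp only: Dd)
  have sApos: "sin(2*a) > 0" "sin(2*b) > 0" "sin(2*c) > 0" "sin(2*d) > 0"
    using angs Aa Bb Cc Dd by (auto intro!: sin_gt_zero)
  have hr: "0 < a" "a < pi/2" "0 < b" "b < pi/2" "0 < c" "c < pi/2" "0 < d" "d < pi/2"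
    using angs by (auto simp: a_def b_def c_def d_def)
  have Dpos: "sin(-a+b+c+d)*sin(a-b+c+d)*sin(a+b-c+d)*sin(a+b+c-d) > 0"
  proof -
    have "qM A B C D = (sin(2*a)*sin(2*b)*sin(2*c)*sin(2*d)) /
        (sin(-a+b+c+d)*sin(a-b+c+d)*sin(a+b-c+d)*sin(a+b+c-d))"
      unfolding qM_def qa qb qc qd by simp
    moreover have "sin(2*a)*sin(2*b)*sin(2*c)*sin(2*d) > 0" using sApos by simp
    ultimately show ?thesis using Mi by (simp add: zero_less_divide_iff)
  qed
  note bp = bars_pos[OF hr Dpos]
  have nd1: "\<forall>k::int. A + 1*B + 1*C + 1*D \<noteq> 2*pi*of_int k"
   and nd2: "\<forall>k::int. A + (-1)*B + (-1)*C + 1*D \<noteq> 2*pi*of_int k"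
   and nd3: "\<forall>k::int. A + 1*B + (-1)*C + (-1)*D \<noteq> 2*pi*of_int k"
   and nd4: "\<forall>k::int. A + (-1)*B + 1*C + (-1)*D \<noteq> 2*pi*of_int k"
    using ndi unfolding nondeg_def by blast+
  have Snz: "sin(a+b+c+d) \<noteq> 0"
    by (rule sin_half_nz) (use nd1 in \<open>simp add: a_def b_def c_def d_def algebra_simps\<close>)
  have sPnz: "sin(-a+b+c-d) \<noteq> 0"
  proof (rule sin_half_nz, rule allI)
    fix k :: int
    have "A + (-1)*B + (-1)*C + 1*D \<noteq> 2*pi*of_int (-k)" using nd2 by blast
    thus "2*(-a+b+c-d) \<noteq> 2*pi*of_int k" by (simp add: a_def b_def c_def d_def algebra_simps)
  qed
  have sQnz: "sin(a+b-c-d) \<noteq> 0"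
    by (rule sin_half_nz) (use nd3 in \<open>simp add: a_def b_def c_def d_def algebra_simps\<close>)
  have sRnz: "sin(-a+b-c+d) \<noteq> 0"
  proof (rule sin_half_nz, rule allI)
    fix k :: int
    have "A + (-1)*B + 1*C + (-1)*D \<noteq> 2*pi*of_int (-k)" using nd4 by blast
    thus "2*(-a+b-c+d) \<noteq> 2*pi*of_int k" by (simp add: a_def b_def c_def d_def algebra_simps)
  qed
  note T = trig_ids[where a=a and b=b and c=c and d=d]
    have hE: "eps A B C D = sgn (sin (a+b+c+d))" unfolding eps_def sg(1) ..
  have hx: "qx A B C D = 1 / ((sin(2*a)/sin(-a+b+c+d))*(sin(2*d)/sin(a+b+c-d)) - 1)"
    unfolding qx_def qr_def qa qd ..
  have hy: "qy A B C D = 1 / ((sin(2*c)/sin(a+b-c+d))*(sin(2*d)/sin(a+b+c-d)) - 1)"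
    unfolding qy_def qs_def qc qd ..
  have hz: "qz A B C D = 1 / ((sin(2*a)/sin(-a+b+c+d))*(sin(2*c)/sin(a+b-c+d)) - 1)"
    unfolding qz_def qf_def qa qc ..
  have hu: "qu A B C D = 1 - (sin(2*a)/sin(-a+b+c+d))*(sin(2*b)/sin(a-b+c+d))*(sin(2*c)/sin(a+b-c+d))*(sin(2*d)/sin(a+b+c-d))"
    unfolding qu_def qM_def qa qb qc qd ..
  have R: "cos (2*a) = eps A B C D * (1 - qy A B C D*qz A B C D*qu A B C D + qx A B C D*qz A B C D*qu A B C D - qx A B C D*qy A B C D*qu A B C D) / (2 * sqrt (qx A B C D*qz A B C D*qu A B C D*(1+qy A B C D)*(1+qu A B C D*qy A B C D)))
          \<and> cos (2*c) = eps A B C D * (1 + qy A B C D*qz A B C D*qu A B C D - qx A B C D*qz A B C D*qu A B C D - qx A B C D*qy A B C D*qu A B C D) / (2 * sqrt (qy A B C D*qz A B C D*qu A B C D*(1+qx A B C D)*(1+qu A B C D*qx A B C D)))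
          \<and> cos (2*d) = eps A B C D * (1 - qy A B C D*qz A B C D*qu A B C D - qx A B C D*qz A B C D*qu A B C D + qx A B C D*qy A B C D*qu A B C D) / (2 * sqrt (qx A B C D*qy A B C D*qu A B C D*(1+qz A B C D)*(1+qu A B C D*qz A B C D)))
          \<and> cos (a+b+c+d) = (1 - qu A B C D*(qx A B C D*qy A B C D + qx A B C D*qz A B C D + qy A B C D*qz A B C D + 2*qx A B C D*qy A B C D*qz A B C D)) / (2 * sqrt (qx A B C D*qy A B C D*qz A B C D*qu A B C D^2*(1+qx A B C D)*(1+qy A B C D)*(1+qz A B C D)))
          \<and> cos (2*b) = eps A B C D * (qu A B C D*(1+qx A B C D)*(1+qy A B C D)*(1+qz A B C D) + (1+qu A B C D*qx A B C D)*(1+qu A B C D*qy A B C D)*(1+qu A B C D*qz A B C D) - qu A B C D*qx A B C D*qy A B C D*qz A B C D*(qu A B C D-1)^2)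
                 / (2 * sqrt (qu A B C D*(1+qx A B C D)*(1+qy A B C D)*(1+qz A B C D)*(1+qu A B C D*qx A B C D)*(1+qu A B C D*qy A B C D)*(1+qu A B C D*qz A B C D)))"
  by (rule alg_main[where S="sin(a+b+c+d)" and pa="sin(-a+b+c+d)" and pb="sin(a-b+c+d)" and pc="sin(a+b-c+d)" and pd="sin(a+b+c-d)" and sP="sin(-a+b+c-d)" and sQ="sin(a+b-c-d)" and sR="sin(-a+b-c+d)" and sA="sin(2*a)" and sB="sin(2*b)" and sC="sin(2*c)" and sD="sin(2*d)" and cA="cos(2*a)" and cB="cos(2*b)" and cC="cos(2*c)" and cD="cos(2*d)" and cs="cos(a+b+c+d)" and x="qx A B C D" and y="qy A B C D" and z="qz A B C D" and u="qu A B C D" and e="eps A B C D"]) (fact bp sApos Snz sPnz sQnz sRnz T hE hx hy hz hu)+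
  show ?thesis
    unfolding Let_def using R
    by (simp only: A_def[symmetric] B_def[symmetric] C_def[symmetric] D_def[symmetric] Aa[symmetric] Bb[symmetric] Cc[symmetric] Dd[symmetric] sg(1)[symmetric])
qed

end
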